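(* Let $m\ge2$ and let $\mathcal{A}\in\mathbb{S}_{m,n}$ be a Hankel tensor with generating vector $v=(v_0,\dots,v_{(n-1)m})^T$. If $\mathcal{A}$ is completely positive, then for every $s\in[m]$ its $s$-induced tensor is completely positive.
   Context: $\mathcal{A}=(a_{i_1\ldots i_m})$ is a Hankel tensor with generating vector $v$ if $a_{i_1\ldots i_m}=v_{i_1+\dots+i_m-m}$ for all indices. For $s\in[m]$, the $s$-induced tensor of $\mathcal{A}$ is the Hankel tensor $\mathcal{B}_s\in\mathbb{S}_{s,n}$ with generating vector $(v_0,\dots,v_{(n-1)s})^T$, i.e. $(\mathcal{B}_s)_{i_1\ldots i_s}=v_{i_1+\dots+i_s-s}$ (equivalently, $(\mathcal{B}_s)_{i_1\ldots i_s}=a_{i_1\ldots i_s1\ldots1}$). A tensor in $\mathbb{S}_{p,n}$ is completely positive if it equals $\sum_{k=1}^r(u^{(k)})^p$ with $u^{(k)}\in\mathbb{R}^n_+$, where $(u^p)_{i_1\ldots i_p}=u_{i_1}\cdots u_{i_p}$. *)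

theory Defs
  imports Complex_Main
begin

text \<open>Real tensors of order p and dimension n are represented as functions on index
lists: an index is a list of length p with entries in {0..<n} (0-based indexing,
so the paper's index i corresponds to i-1 here). Only values at valid indices matter.\<close>

definition tensor_indices :: "nat \<Rightarrow> nat \<Rightarrow> nat list set" where
  "tensor_indices p n = {is. length is = p \<and> (\<forall>i\<in>set is. i < n)}"

text \<open>Hankel tensor of order m, dimension n with generating vector v
(paper: a_{i1..im} = v_{i1+...+im-m} with 1-based indices; here 0-based, so v_{sum}).\<close>
definition is_hankel :: "nat \<Rightarrow> nat \<Rightarrow> (nat list \<Rightarrow> real) \<Rightarrow> (nat \<Rightarrow> real) \<Rightarrow> bool" where
  "is_hankel m n A v \<longleftrightarrow> (\<forall>is\<in>tensor_indices m n. A is = v (sum_list is))"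

definition hankel_tensor :: "(nat \<Rightarrow> real) \<Rightarrow> nat list \<Rightarrow> real" where
  "hankel_tensor v = (\<lambda>is. v (sum_list is))"

definition completely_positive :: "nat \<Rightarrow> nat \<Rightarrow> (nat list \<Rightarrow> real) \<Rightarrow> bool" where
  "completely_positive p n A \<longleftrightarrow>
     (\<exists>r::nat. \<exists>u :: nat \<Rightarrow> nat \<Rightarrow> real.
        (\<forall>k<r. \<forall>i<n. u k i \<ge> 0) \<and>
        (\<forall>is\<in>tensor_indices p n. A is = (\<Sum>k<r. \<Prod>j<p. u k (is ! j))))"

end

theory Submission
  imports Defs
begin

lemma prod_pad:
  fixes f :: "nat \<Rightarrow> real"
  assumes "length is = s" "s \<le> m"
  shows "(\<Prod>j<m. f ((is @ replicate (m - s) 0) ! j)) = (\<Prod>j<s. f (is ! j)) * f 0 ^ (m - s)"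
proof -
  have "{..<m} = {..<s} \<union> {s..<m}" using assms by auto
  hence "(\<Prod>j<m. f ((is @ replicate (m - s) 0) ! j))
     = (\<Prod>j<s. f ((is @ replicate (m - s) 0) ! j)) * (\<Prod>j\<in>{s..<m}. f ((is @ replicate (m - s) 0) ! j))"
    by (simp add: prod.union_disjoint ivl_disj_int)
  also have "(\<Prod>j<s. f ((is @ replicate (m - s) 0) ! j)) = (\<Prod>j<s. f (is ! j))"
    using assms by (intro prod.cong) (auto simp: nth_append)
  also have "(\<Prod>j\<in>{s..<m}. f ((is @ replicate (m - s) 0) ! j)) = (\<Prod>j\<in>{s..<m}. f 0)"
    using assms by (intro prod.cong) (auto simp: nth_append)
  finally show ?thesis by simp
qed

theorem mainTheorem20:
  fixes m n :: nat and A :: "nat list \<Rightarrow> real" and v :: "nat \<Rightarrow> real"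
  assumes "m \<ge> 2"
    and "is_hankel m n A v"
    and "completely_positive m n A"
  shows "\<forall>s\<in>{1..m}. completely_positive s n (hankel_tensor v)"
proof
  fix s assume s: "s \<in> {1..m}"
  obtain r :: nat and u :: "nat \<Rightarrow> nat \<Rightarrow> real" where u0: "\<forall>k<r. \<forall>i<n. u k i \<ge> 0"
    and uA: "\<forall>is\<in>tensor_indices m n. A is = (\<Sum>k<r. \<Prod>j<m. u k (is ! j))"
    using assms(3) unfolding completely_positive_def by (elim exE conjE) blast
  show "completely_positive s n (hankel_tensor v)"
  proof (cases "n = 0")
    case True
    have "tensor_indices s n = {}" using s True
      by (auto simp: tensor_indices_def)
    then show ?thesis unfolding completely_positive_def by auto
  next
    case False
    define c where "c k = root s (u k 0 ^ (m - s))" for k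
    define w where "w k i = u k i * c k" for k i
    have cs: "c k ^ s = u k 0 ^ (m - s)" if "k < r" for k
      unfolding c_def using s u0 False that by (intro real_root_pow_pos2) auto
    have w0: "\<forall>k<r. \<forall>i<n. w k i \<ge> 0"
      unfolding w_def c_def using u0 False by (auto intro!: mult_nonneg_nonneg real_root_ge_zero)
    have "\<forall>is\<in>tensor_indices s n. hankel_tensor v is = (\<Sum>k<r. \<Prod>j<s. w k (is ! j))"
    proof
      fix "is" assume is_: "is \<in> tensor_indices s n"
      let ?js = "is @ replicate (m - s) 0"
      have js: "?js \<in> tensor_indices m n" using is_ s False by (auto simp: tensor_indices_def)
      have "hankel_tensor v is = v (sum_list ?js)" by (simp add: hankel_tensor_def sum_list_replicate)
      also have "\<dots> = A ?js" using assms(2) js by (simp add: is_hankel_def)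
      also have "\<dots> = (\<Sum>k<r. \<Prod>j<m. u k (?js ! j))" using uA js by blast
      also have "\<dots> = (\<Sum>k<r. \<Prod>j<s. w k (is ! j))"
      proof (intro sum.cong refl)
        fix k assume "k \<in> {..<r}"
        hence k: "k < r" by simp
        have "(\<Prod>j<m. u k (?js ! j)) = (\<Prod>j<s. u k (is ! j)) * u k 0 ^ (m - s)"
          using is_ s by (intro prod_pad) (auto simp: tensor_indices_def)
        also have "\<dots> = (\<Prod>j<s. u k (is ! j)) * c k ^ s" using cs k by simp
        also have "\<dots> = (\<Prod>j<s. w k (is ! j))"
          unfolding w_def by (simp add: prod.distrib)
        finally show "(\<Prod>j<m. u k (?js ! j)) = (\<Prod>j<s. w k (is ! j))" .
      qed
      finally show "hankel_tensor v is = (\<Sum>k<r. \<Prod>j<s. w k (is ! j))" .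
    qed
    then show ?thesis unfolding completely_positive_def using w0 by blast
  qed
qed

end
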